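(* Let $J$ be a countable set and $\mathcal{A}$ the (non-unital) algebra of functions $f:J\to\mathbb{R}$ with $f(i)=0$ for all but finitely many $i\in J$, with pointwise operations; for $i\in J$ let $e_i$ be the characteristic function of $\{i\}$. Let $\sigma:J\to J$ be a bijection and $\tilde{\sigma}:\mathcal{A}\to\mathcal{A}$, $\tilde{\sigma}(f)=f\circ\sigma^{-1}$. An $\mathbb{R}$-linear map $\Delta:\mathcal{A}\to\mathcal{A}$ is a $\tilde{\sigma}$-derivation if and only if for every $i\in J$: (1) $\Delta(e_i)(\sigma(i))=-\Delta(e_{\sigma(i)})(\sigma(i))$, and (2) $\Delta(e_i)(k)=0$ for all $k\notin\{i,\sigma(i)\}$.
   Context: A $\tilde{\sigma}$-derivation is an $\mathbb{R}$-linear map $\Delta:\mathcal{A}\to\mathcal{A}$ with $\Delta(fg)=\tilde{\sigma}(f)\Delta(g)+\Delta(f)g$ for all $f,g\in\mathcal{A}$. *)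

theory Defs
  imports Complex_Main "HOL-Library.Countable"
begin

definition fin_supp :: "('j \<Rightarrow> real) set" where
  "fin_supp = {f. finite {i. f i \<noteq> 0}}"

definition char_fun :: "'j \<Rightarrow> 'j \<Rightarrow> real" where
  "char_fun i = (\<lambda>k. if k = i then 1 else 0)"

definition sigma_tilde :: "('j \<Rightarrow> 'j) \<Rightarrow> ('j \<Rightarrow> real) \<Rightarrow> ('j \<Rightarrow> real)" where
  "sigma_tilde \<sigma> f = f \<circ> inv \<sigma>"

definition linear_on_A :: "(('j \<Rightarrow> real) \<Rightarrow> ('j \<Rightarrow> real)) \<Rightarrow> bool" where
  "linear_on_A D \<longleftrightarrow> (\<forall>f\<in>fin_supp. D f \<in> fin_supp)
     \<and> (\<forall>f\<in>fin_supp. \<forall>g\<in>fin_supp. D (\<lambda>k. f k + g k) = (\<lambda>k. D f k + D g k))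
     \<and> (\<forall>c::real. \<forall>f\<in>fin_supp. D (\<lambda>k. c * f k) = (\<lambda>k. c * D f k))"

definition sigma_derivation :: "('j \<Rightarrow> 'j) \<Rightarrow> (('j \<Rightarrow> real) \<Rightarrow> ('j \<Rightarrow> real)) \<Rightarrow> bool" where
  "sigma_derivation \<sigma> D \<longleftrightarrow> linear_on_A D \<and>
     (\<forall>f\<in>fin_supp. \<forall>g\<in>fin_supp. D (\<lambda>k. f k * g k) = (\<lambda>k. sigma_tilde \<sigma> f k * D g k + D f k * g k))"

end

theory Submission
  imports Defs
begin

lemma char_fin[simp]: "char_fun i \<in> fin_supp"
  by (simp add: fin_supp_def char_fun_def)

lemma fin_mult: "f \<in> fin_supp \<Longrightarrow> (\<lambda>k. f k * g k) \<in> fin_supp"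
  unfolding fin_supp_def by (auto elim: finite_subset[rotated])

lemma fin_scal: "f \<in> fin_supp \<Longrightarrow> (\<lambda>k. c * f k) \<in> fin_supp"
  unfolding fin_supp_def by (auto elim: finite_subset[rotated])

lemma lin_add: "linear_on_A D \<Longrightarrow> f \<in> fin_supp \<Longrightarrow> g \<in> fin_supp \<Longrightarrow> D (\<lambda>k. f k + g k) = (\<lambda>k. D f k + D g k)"
  unfolding linear_on_A_def by blast

lemma lin_smul: "linear_on_A D \<Longrightarrow> f \<in> fin_supp \<Longrightarrow> D (\<lambda>k. c * f k) = (\<lambda>k. c * D f k)"
  unfolding linear_on_A_def by blast

lemma lin_zero:
  assumes "linear_on_A D" shows "D (\<lambda>k. 0) = (\<lambda>k. 0)"
proof -
  have z: "(\<lambda>k. 0::real) \<in> fin_supp" by (simp add: fin_supp_def)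
  show ?thesis using lin_smul[OF assms z, of 0] by simp
qed

lemma lin_repr:
  assumes L: "linear_on_A D" and S: "finite S"
  shows "\<forall>f. {i. f i \<noteq> 0} \<subseteq> S \<longrightarrow> D f m = (\<Sum>i\<in>S. f i * D (char_fun i) m)"
  using S
proof (induction S rule: finite_induct)
  case empty
  then show ?case using lin_zero[OF L]
    by (auto simp: fun_eq_iff)
next
  case (insert x S)
  show ?case
  proof (intro allI impI)
    fix f :: "'a \<Rightarrow> real"
    assume sf: "{i. f i \<noteq> 0} \<subseteq> insert x S"
    define f' where "f' = (\<lambda>k. if k = x then 0 else f k)"
    have sf': "{i. f' i \<noteq> 0} \<subseteq> S" using sf by (auto simp: f'_def)
    have f'fin: "f' \<in> fin_supp" unfolding fin_supp_def
      using sf' insert(1) finite_subset by blast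
    have cfin: "(\<lambda>k. f x * char_fun x k) \<in> fin_supp" by (rule fin_scal) simp
    have feq: "f = (\<lambda>k. (\<lambda>k. f x * char_fun x k) k + f' k)"
      by (auto simp: fun_eq_iff f'_def char_fun_def)
    have "D f = (\<lambda>k. D (\<lambda>k. f x * char_fun x k) k + D f' k)"
      apply (subst feq) using lin_add[OF L cfin f'fin] by simp
    moreover have "D (\<lambda>k. f x * char_fun x k) = (\<lambda>k. f x * D (char_fun x) k)"
      using L unfolding linear_on_A_def by simp
    moreover have "D f' m = (\<Sum>i\<in>S. f' i * D (char_fun i) m)" using insert(3) sf' by blast
    moreover have "(\<Sum>i\<in>S. f' i * D (char_fun i) m) = (\<Sum>i\<in>S. f i * D (char_fun i) m)"
      using insert(2) by (intro sum.cong) (auto simp: f'_def)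
    ultimately show "D f m = (\<Sum>i\<in>insert x S. f i * D (char_fun i) m)"
      using insert(1,2) by simp
  qed
qed

lemma lin_repr2:
  assumes L: "linear_on_A D" and f: "f \<in> fin_supp"
  shows "D f m = (\<Sum>i\<in>{i. f i \<noteq> 0}. f i * D (char_fun i) m)"
  using lin_repr[OF L, of "{i. f i \<noteq> 0}"] f unfolding fin_supp_def by blast

lemma sum_two:
  assumes "finite S" and "\<And>i. i \<in> S \<Longrightarrow> i \<noteq> a \<Longrightarrow> i \<noteq> b \<Longrightarrow> h i = 0"
    and "a \<noteq> b" and "\<And>i. i \<notin> S \<Longrightarrow> h i = 0"
  shows "sum h S = h a + h b"
proof -
  have "sum h S = sum h (S \<union> {a, b})"
    using assms by (intro sum.mono_neutral_left) auto
  also have "\<dots> = sum h {a, b}"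
    using assms by (intro sum.mono_neutral_right) auto
  also have "\<dots> = h a + h b" using assms by simp
  finally show ?thesis .
qed

lemma sum_one:
  assumes "finite S" and "\<And>i. i \<in> S \<Longrightarrow> i \<noteq> a \<Longrightarrow> h i = 0"
    and "\<And>i. i \<notin> S \<Longrightarrow> h i = 0"
  shows "sum h S = h a"
proof -
  have "sum h S = sum h (S \<union> {a})"
    using assms by (intro sum.mono_neutral_left) auto
  also have "\<dots> = sum h {a}"
    using assms by (intro sum.mono_neutral_right) auto
  finally show ?thesis by simp
qed

lemma formula:
  assumes B: "bij \<sigma>" and L: "linear_on_A D"
    and C: "\<forall>i. D (char_fun i) (\<sigma> i) = - D (char_fun (\<sigma> i)) (\<sigma> i)
       \<and> (\<forall>k. k \<notin> {i, \<sigma> i} \<longrightarrow> D (char_fun i) k = 0)"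
    and f: "f \<in> fin_supp"
  shows "D f m = (f m - f (inv \<sigma> m)) * D (char_fun m) m"
proof -
  define p where "p = inv \<sigma> m"
  have sp: "\<sigma> p = m" using B by (simp add: p_def bij_is_surj surj_f_inv_f)
  have fs: "finite {i. f i \<noteq> 0}" using f by (simp add: fin_supp_def)
  have zero: "D (char_fun i) m = 0" if "i \<noteq> m" "i \<noteq> p" for i
  proof -
    have "\<sigma> i \<noteq> m" using sp that B by (metis bij_def inj_eq)
    then show ?thesis using C that by auto
  qed
  have rep: "D f m = (\<Sum>i\<in>{i. f i \<noteq> 0}. f i * D (char_fun i) m)"
    by (rule lin_repr2[OF L f])
  show ?thesis
  proof (cases "p = m")
    case True
    have c0: "D (char_fun m) m = 0" using C[rule_format, of m] True sp by auto
    have "D f m = f m * D (char_fun m) m"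
      unfolding rep using fs zero True by (intro sum_one) auto
    then show ?thesis using c0 by (simp add: p_def[symmetric])
  next
    case False
    have cp: "D (char_fun p) m = - D (char_fun m) m" using C[rule_format, of p] sp by auto
    have "D f m = f m * D (char_fun m) m + f p * D (char_fun p) m"
      unfolding rep using fs zero False by (intro sum_two) auto
    then show ?thesis using cp by (simp add: p_def[symmetric] algebra_simps)
  qed
qed

theorem theorem6:
  fixes \<sigma> :: "'j::countable \<Rightarrow> 'j"
    and D :: "('j \<Rightarrow> real) \<Rightarrow> ('j \<Rightarrow> real)"
  assumes "bij \<sigma>"
    and "linear_on_A D"
  shows "sigma_derivation \<sigma> D \<longleftrightarrow>
    (\<forall>i. D (char_fun i) (\<sigma> i) = - D (char_fun (\<sigma> i)) (\<sigma> i)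
       \<and> (\<forall>k. k \<notin> {i, \<sigma> i} \<longrightarrow> D (char_fun i) k = 0))"
proof
  assume SD: "sigma_derivation \<sigma> D"
  have P: "\<And>f g. f \<in> fin_supp \<Longrightarrow> g \<in> fin_supp \<Longrightarrow> D (\<lambda>k. f k * g k) = (\<lambda>k. sigma_tilde \<sigma> f k * D g k + D f k * g k)"
    using SD unfolding sigma_derivation_def by blast
  have st: "sigma_tilde \<sigma> (char_fun i) = char_fun (\<sigma> i)" for i
    using assms(1) by (auto simp: sigma_tilde_def char_fun_def fun_eq_iff bij_is_surj surj_f_inv_f bij_is_inj inv_f_f)
  have off: "D (char_fun i) k = - char_fun (\<sigma> i) k * D (char_fun k) k" if "k \<noteq> i" for i k
  proof -
    have "(\<lambda>m. char_fun i m * char_fun k m) = (\<lambda>m. 0)" using that by (auto simp: char_fun_def)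
    then have "(\<lambda>m. 0) = (\<lambda>m. char_fun (\<sigma> i) m * D (char_fun k) m + D (char_fun i) m * char_fun k m)"
      using P[of "char_fun i" "char_fun k"] lin_zero[OF assms(2)] st by simp
    then have "0 = char_fun (\<sigma> i) k * D (char_fun k) k + D (char_fun i) k * char_fun k k"
      by (metis)
    then show ?thesis by (simp add: char_fun_def)
  qed
  have diag: "D (char_fun i) i = 0" if "\<sigma> i = i" for i
  proof -
    have "(\<lambda>m. char_fun i m * char_fun i m) = char_fun i" by (auto simp: char_fun_def fun_eq_iff)
    then have "D (char_fun i) = (\<lambda>m. char_fun i m * D (char_fun i) m + D (char_fun i) m * char_fun i m)"
      using P[of "char_fun i" "char_fun i"] st that by simp
    then have "D (char_fun i) i = char_fun i i * D (char_fun i) i + D (char_fun i) i * char_fun i i"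
      by metis
    then show ?thesis by (simp add: char_fun_def)
  qed
  show "\<forall>i. D (char_fun i) (\<sigma> i) = - D (char_fun (\<sigma> i)) (\<sigma> i)
       \<and> (\<forall>k. k \<notin> {i, \<sigma> i} \<longrightarrow> D (char_fun i) k = 0)"
  proof (intro allI conjI impI)
    fix i
    show "D (char_fun i) (\<sigma> i) = - D (char_fun (\<sigma> i)) (\<sigma> i)"
    proof (cases "\<sigma> i = i")
      case True then show ?thesis using diag by simp
    next
      case False then show ?thesis using off[of "\<sigma> i" i] by (simp add: char_fun_def)
    qed
  next
    fix i k assume "k \<notin> {i, \<sigma> i}"
    then show "D (char_fun i) k = 0" using off[of k i] by (simp add: char_fun_def)
  qed
next
  assume C: "\<forall>i. D (char_fun i) (\<sigma> i) = - D (char_fun (\<sigma> i)) (\<sigma> i)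
       \<and> (\<forall>k. k \<notin> {i, \<sigma> i} \<longrightarrow> D (char_fun i) k = 0)"
  show "sigma_derivation \<sigma> D"
    unfolding sigma_derivation_def
  proof (intro conjI ballI assms(2))
    fix f g :: "'j \<Rightarrow> real" assume f: "f \<in> fin_supp" and g: "g \<in> fin_supp"
    show "D (\<lambda>k. f k * g k) = (\<lambda>k. sigma_tilde \<sigma> f k * D g k + D f k * g k)"
    proof
      fix m
      show "D (\<lambda>k. f k * g k) m = sigma_tilde \<sigma> f m * D g m + D f m * g m"
        using formula[OF assms C f, of m] formula[OF assms C g, of m]
          formula[OF assms C fin_mult[OF f], of g m]
        unfolding sigma_tilde_def o_def by (simp only:) (simp add: algebra_simps)
    qed
  qed
qed

end
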